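(* Let $X$ be any quasi-compact Noetherian topological space and $f\colon X\to X$ any continuous map. Then for any finite open cover $\mathfrak U$ of $X$ and any $\epsilon>0$ there is $C>0$ such that \[ N(\mathfrak U_n)\le C(1+\epsilon)^n\quad\text{for all } n, \] where $\mathfrak U_n=\mathfrak U\vee f^{-1}\mathfrak U\vee\dots\vee f^{-(n-1)}\mathfrak U$. In particular $h_{\mathrm{top}}(f)=0$.
   Context: A topological space is Noetherian if every decreasing sequence of closed subsets is eventually stationary. For finite covers $\mathfrak U=\{U_i\},\mathfrak V=\{V_j\}$, $\mathfrak U\vee\mathfrak V=\{U_i\cap V_j\}$, and $N(\mathfrak U)$ is the minimal number of members of $\mathfrak U$ needed to cover $X$. $h_{\mathrm{top}}(f)=\sup_{\mathfrak U}\lim_n\frac1n\log N(\mathfrak U_n)$ over finite open covers. *)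

theory Defs
  imports "HOL-Analysis.Analysis"
begin

definition noetherian_space :: "'a topology \<Rightarrow> bool" where
  "noetherian_space X \<longleftrightarrow>
     (\<forall>C :: nat \<Rightarrow> 'a set. (\<forall>n. closedin X (C n)) \<and> decseq C \<longrightarrow> (\<exists>m. \<forall>n\<ge>m. C n = C m))"

definition finite_open_cover :: "'a topology \<Rightarrow> 'a set set \<Rightarrow> bool" where
  "finite_open_cover X U \<longleftrightarrow> finite U \<and> (\<forall>A\<in>U. openin X A) \<and> \<Union>U = topspace X"

definition join_iter :: "'a topology \<Rightarrow> ('a \<Rightarrow> 'a) \<Rightarrow> 'a set set \<Rightarrow> nat \<Rightarrow> 'a set set" where
  "join_iter X f U n =
     {topspace X \<inter> (\<Inter>k\<in>{..<n}. (f ^^ k) -` (g k)) | g. \<forall>k<n. g k \<in> U}"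

definition min_subcover_card :: "'a topology \<Rightarrow> 'a set set \<Rightarrow> nat" where
  "min_subcover_card X V =
     (LEAST k. \<exists>W. W \<subseteq> V \<and> finite W \<and> card W = k \<and> topspace X \<subseteq> \<Union>W)"

definition h_top :: "'a topology \<Rightarrow> ('a \<Rightarrow> 'a) \<Rightarrow> ereal" where
  "h_top X f =
     (SUP U \<in> {U. finite_open_cover X U}.
        ereal (lim (\<lambda>n. ln (real (min_subcover_card X (join_iter X f U n))) / real n)))"

end

theory Submission
  imports Defs
begin

definition agree :: "nat \<Rightarrow> (nat \<Rightarrow> 'b) \<Rightarrow> (nat \<Rightarrow> 'b) \<Rightarrow> bool" where
  "agree n s t \<longleftrightarrow> (\<forall>k<n. s k = t k)"

definition shq :: "nat \<Rightarrow> (nat \<Rightarrow> 'b) \<Rightarrow> (nat \<Rightarrow> 'b)" where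
  "shq j s = (\<lambda>k. s (k + j))"

definition closedS :: "(nat \<Rightarrow> 'b) set \<Rightarrow> bool" where
  "closedS K \<longleftrightarrow> (\<forall>s. (\<forall>n. \<exists>t\<in>K. agree n s t) \<longrightarrow> s \<in> K)"

definition invS :: "(nat \<Rightarrow> 'b) set \<Rightarrow> bool" where
  "invS K \<longleftrightarrow> (\<forall>s\<in>K. shq 1 s \<in> K)"

definition alph :: "'b set \<Rightarrow> (nat \<Rightarrow> 'b) set \<Rightarrow> bool" where
  "alph A K \<longleftrightarrow> (\<forall>s\<in>K. \<forall>k. s k \<in> A)"

definition Lw :: "nat \<Rightarrow> (nat \<Rightarrow> 'b) set \<Rightarrow> (nat \<Rightarrow> 'b) set" where
  "Lw n K = (\<lambda>s. restrict s {..<n}) ` K"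

definition derivS :: "(nat \<Rightarrow> 'b) set \<Rightarrow> (nat \<Rightarrow> 'b) set" where
  "derivS K = {s\<in>K. \<forall>n. \<exists>t\<in>K. t \<noteq> s \<and> agree n s t}"

lemma agree_refl[simp]: "agree n s s"
  by (simp add: agree_def)

lemma agree_sym: "agree n s t \<Longrightarrow> agree n t s"
  by (simp add: agree_def)

lemma agree_trans: "agree n s t \<Longrightarrow> agree n t u \<Longrightarrow> agree n s u"
  by (simp add: agree_def)

lemma agree_mono: "m \<le> n \<Longrightarrow> agree n s t \<Longrightarrow> agree m s t"
  by (simp add: agree_def)

lemma agree_0[simp]: "agree 0 s t"
  by (simp add: agree_def)

lemma konig_build:
  fixes P :: "nat \<Rightarrow> (nat \<Rightarrow> 'b) \<Rightarrow> bool"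
  assumes P0: "P 0 v0"
    and ext: "\<And>m v. P m v \<Longrightarrow> \<exists>v'. agree (n+m) v v' \<and> P (Suc m) v'"
    and cong: "\<And>m v v'. P m v \<Longrightarrow> agree (n+m) v v' \<Longrightarrow> P m v'"
  shows "\<exists>s. agree n s v0 \<and> (\<forall>m. P m s)"
proof -
  define nx where "nx = (\<lambda>m v. SOME v'. agree (n+m) v v' \<and> P (Suc m) v')"
  define w where "w = rec_nat v0 (\<lambda>m v. nx m v)"
  have w0: "w 0 = v0" and wS: "\<And>m. w (Suc m) = nx m (w m)" by (simp_all add: w_def)
  have Pw: "P m (w m) \<and> agree (n+m) (w m) (w (Suc m))" for m
  proof (induction m)
    case 0
    have "P 0 (w 0)" using P0 w0 by simp
    then have "agree (n+0) (w 0) (w (Suc 0)) \<and> P (Suc 0) (w (Suc 0))"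
      unfolding wS nx_def using someI_ex[OF ext] by blast
    then show ?case using \<open>P 0 (w 0)\<close> by simp
  next
    case (Suc m)
    have "P (Suc m) (w (Suc m))"
      using Suc someI_ex[OF ext[of m "w m"]] unfolding wS nx_def by blast
    then have "agree (n + Suc m) (w (Suc m)) (w (Suc (Suc m))) \<and> P (Suc (Suc m)) (w (Suc (Suc m)))"
      unfolding wS[of "Suc m"] nx_def using someI_ex[OF ext] by blast
    then show ?case using \<open>P (Suc m) (w (Suc m))\<close> by simp
  qed
  have agj: "agree (n+m) (w m) (w (m+d))" for m d
  proof (induction d)
    case 0 then show ?case by simp
  next
    case (Suc d)
    have "agree (n+(m+d)) (w (m+d)) (w (Suc (m+d)))" using Pw by blast
    then have "agree (n+m) (w (m+d)) (w (m + Suc d))" using agree_mono[of "n+m" "n+(m+d)"] by simp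
    then show ?case using Suc agree_trans by blast
  qed
  define s where "s = (\<lambda>k. w (Suc k) k)"
  have ags: "agree (n+m) s (w m)" for m
    unfolding agree_def
  proof (intro allI impI)
    fix k assume k: "k < n + m"
    show "s k = w m k"
    proof (cases "Suc k \<le> m")
      case True
      then obtain d where "m = Suc k + d" using le_Suc_ex by blast
      then have "agree (n + Suc k) (w (Suc k)) (w m)" using agj[of "Suc k" d] by simp
      then show ?thesis unfolding s_def agree_def by simp
    next
      case False
      then obtain d where "Suc k = m + d" by (metis le_Suc_ex nat_le_linear)
      then have "agree (n + m) (w m) (w (Suc k))" using agj[of m d] by simp
      then show ?thesis unfolding s_def agree_def using k by simp
    qed
  qed
  have "P m s" for m
    using cong[of m "w m" s] Pw ags agree_sym by blast
  moreover have "agree n s v0" using ags[of 0] w0 by simp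
  ultimately show ?thesis by blast
qed

lemma finite_chain_min:
  assumes "finite F" "F \<noteq> {}" "\<forall>x\<in>F. \<forall>y\<in>F. x \<subseteq> y \<or> y \<subseteq> x"
  shows "\<exists>m\<in>F. \<forall>x\<in>F. m \<subseteq> x"
  using assms
proof (induction F rule: finite_ne_induct)
  case (singleton x) then show ?case by simp
next
  case (insert x F)
  then obtain m where m: "m \<in> F" "\<forall>y\<in>F. m \<subseteq> y" by auto
  have "x \<subseteq> m \<or> m \<subseteq> x" using insert.prems m(1) by auto
  then show ?case
  proof
    assume "x \<subseteq> m" then show ?thesis using m by auto
  next
    assume "m \<subseteq> x" then show ?thesis using m by auto
  qed
qed

lemma Lw_finite:
  assumes "finite A" "alph A K"
  shows "finite (Lw n K)"
proof -
  have "Lw n K \<subseteq> PiE {..<n} (\<lambda>_. A)"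
    unfolding Lw_def
  proof (rule image_subsetI)
    fix s assume "s \<in> K"
    then show "restrict s {..<n} \<in> PiE {..<n} (\<lambda>_. A)"
      using assms(2) unfolding alph_def by (simp add: restrict_PiE_iff)
  qed
  moreover have "finite (PiE {..<n} (\<lambda>_. A))" using assms(1) by (simp add: finite_PiE)
  ultimately show ?thesis by (rule finite_subset)
qed

lemma alph_subset: "alph A K \<Longrightarrow> K' \<subseteq> K \<Longrightarrow> alph A K'"
  unfolding alph_def by blast

lemma chain_L:
  assumes finA: "finite A" and al: "\<forall>K\<in>C. alph A K" and cl: "\<forall>K\<in>C. closedS K"
    and ch: "\<forall>K1\<in>C. \<forall>K2\<in>C. K1 \<subseteq> K2 \<or> K2 \<subseteq> K1" and ne: "C \<noteq> {}"
    and w: "\<forall>K\<in>C. w \<in> Lw n K"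
  shows "w \<in> Lw n (\<Inter>C)"
proof -
  define P where "P = (\<lambda>m v. \<forall>K\<in>C. \<exists>t\<in>K. agree (n+m) v t)"
  have P0: "P 0 w"
    unfolding P_def
  proof
    fix K assume "K \<in> C"
    then obtain t where "t \<in> K" "w = restrict t {..<n}" using w unfolding Lw_def by auto
    then show "\<exists>t\<in>K. agree (n+0) w t" unfolding agree_def by auto
  qed
  have extP: "\<exists>v'. agree (n+m) v v' \<and> P (Suc m) v'" if Pm: "P m v" for m v
  proof (rule ccontr)
    assume nex: "\<not> ?thesis"
    have ag: "agree (n+m) v (v(n+m := a))" for a unfolding agree_def by simp
    have "\<forall>a\<in>A. \<exists>K\<in>C. \<forall>t\<in>K. \<not> agree (n + Suc m) (v(n+m := a)) t"
    proof
      fix a assume "a \<in> A"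
      have "\<not> P (Suc m) (v(n+m := a))" using nex ag[of a] by blast
      then show "\<exists>K\<in>C. \<forall>t\<in>K. \<not> agree (n + Suc m) (v(n+m := a)) t"
        unfolding P_def by blast
    qed
    then obtain Ka where Ka: "\<And>a. a \<in> A \<Longrightarrow> Ka a \<in> C \<and> (\<forall>t\<in>Ka a. \<not> agree (n + Suc m) (v(n+m := a)) t)"
      using bchoice[of A "\<lambda>a K. K \<in> C \<and> (\<forall>t\<in>K. \<not> agree (n + Suc m) (v(n+m := a)) t)"] by blast
    obtain K0 where K0: "K0 \<in> C" using ne by blast
    then obtain t0 where t0: "t0 \<in> K0" using Pm unfolding P_def by blast
    have "A \<noteq> {}" using al K0 t0 unfolding alph_def by blast
    have sub: "Ka ` A \<subseteq> C" using Ka by blast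
    have "\<exists>m\<in>Ka ` A. \<forall>x\<in>Ka ` A. m \<subseteq> x"
    proof (rule finite_chain_min)
      show "finite (Ka ` A)" using finA by simp
      show "Ka ` A \<noteq> {}" using \<open>A \<noteq> {}\<close> by simp
      show "\<forall>x\<in>Ka ` A. \<forall>y\<in>Ka ` A. x \<subseteq> y \<or> y \<subseteq> x" using sub ch by blast
    qed
    then obtain a0 where a0: "a0 \<in> A" "\<forall>a\<in>A. Ka a0 \<subseteq> Ka a" by auto
    obtain t where t: "t \<in> Ka a0" "agree (n+m) v t" using Pm Ka[OF a0(1)] unfolding P_def by blast
    have "t (n+m) \<in> A" using al Ka[OF a0(1)] t(1) unfolding alph_def by blast
    then have "t \<in> Ka (t (n+m))" using a0(2) t(1) by blast
    moreover have "agree (n + Suc m) (v(n+m := t (n+m))) t"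
      using t(2) unfolding agree_def by (auto simp: less_Suc_eq)
    ultimately show False using Ka[OF \<open>t (n+m) \<in> A\<close>] by blast
  qed
  have cong: "P m v'" if "P m v" "agree (n+m) v v'" for m v v'
    using that unfolding P_def by (meson agree_sym agree_trans)
  have "\<exists>s. agree n s w \<and> (\<forall>m. P m s)"
    apply (rule konig_build[where P=P])
      apply (rule P0)
     apply (erule extP)
    apply (erule (1) cong)
    done
  then obtain s where s: "agree n s w" "\<forall>m. P m s" by blast
  have "s \<in> \<Inter>C"
  proof
    fix K assume K: "K \<in> C"
    have "\<forall>m. \<exists>t\<in>K. agree m s t"
    proof
      fix m
      obtain t where "t \<in> K" "agree (n+m) s t" using s(2) K unfolding P_def by blast
      then show "\<exists>t\<in>K. agree m s t" using agree_mono[of m "n+m"] by auto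
    qed
    then show "s \<in> K" using cl K unfolding closedS_def by blast
  qed
  moreover have "w = restrict s {..<n}"
  proof -
    obtain K where K: "K \<in> C" using ne by blast
    then obtain t where "w = restrict t {..<n}" using w unfolding Lw_def by auto
    then show ?thesis using s(1) unfolding agree_def by (auto simp: restrict_def)
  qed
  ultimately show ?thesis unfolding Lw_def by blast
qed

lemma konig_inf:
  assumes finA: "finite A" and al: "alph A K" and cl: "closedS K" and inf: "infinite Q" and QK: "Q \<subseteq> K"
  shows "\<exists>s\<in>K. \<forall>m. infinite {t\<in>Q. agree m s t}"
proof -
  define P where "P = (\<lambda>m v. infinite {t\<in>Q. agree m v t})"
  have P0: "P 0 v0" for v0 unfolding P_def using inf by simp
  have extP: "\<exists>v'. agree (0+m) v v' \<and> P (Suc m) v'" if Pm: "P m v" for m v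
  proof (rule ccontr)
    assume nex: "\<not> ?thesis"
    have ag: "agree (0+m) v (v(m := a))" for a unfolding agree_def by simp
    have fin: "finite {t\<in>Q. agree (Suc m) (v(m := a)) t}" for a
      using nex ag unfolding P_def by blast
    have "{t\<in>Q. agree m v t} \<subseteq> (\<Union>a\<in>A. {t\<in>Q. agree (Suc m) (v(m := a)) t})"
    proof
      fix t assume t: "t \<in> {t\<in>Q. agree m v t}"
      then have "t m \<in> A" using al QK unfolding alph_def by blast
      moreover have "agree (Suc m) (v(m := t m)) t" using t unfolding agree_def by (auto simp: less_Suc_eq)
      ultimately show "t \<in> (\<Union>a\<in>A. {t\<in>Q. agree (Suc m) (v(m := a)) t})" using t by blast
    qed
    moreover have "finite (\<Union>a\<in>A. {t\<in>Q. agree (Suc m) (v(m := a)) t})"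
      using finA fin by blast
    ultimately have "finite {t\<in>Q. agree m v t}" by (rule finite_subset)
    then show False using Pm unfolding P_def by blast
  qed
  have cong: "P m v'" if "P m v" "agree (0+m) v v'" for m v v'
  proof -
    have "{t\<in>Q. agree m v t} = {t\<in>Q. agree m v' t}"
      using that(2) by (auto intro: agree_trans agree_sym)
    then show ?thesis using that(1) unfolding P_def by simp
  qed
  have "\<exists>s. agree 0 s undefined \<and> (\<forall>m. P m s)"
    apply (rule konig_build[where P=P])
      apply (rule P0)
     apply (erule extP)
    apply (erule (1) cong)
    done
  then obtain s where s: "\<forall>m. P m s" by blast
  have "s \<in> K"
  proof -
    have "\<forall>m. \<exists>t\<in>K. agree m s t"
    proof
      fix m
      have "{t\<in>Q. agree m s t} \<noteq> {}" using s unfolding P_def by (metis finite.emptyI)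
      then show "\<exists>t\<in>K. agree m s t" using QK by blast
    qed
    then show ?thesis using cl unfolding closedS_def by blast
  qed
  then show ?thesis using s unfolding P_def by blast
qed

lemma derivS_sub: "derivS K \<subseteq> K"
  unfolding derivS_def by blast

lemma derivS_closed:
  assumes "closedS K" shows "closedS (derivS K)"
  unfolding closedS_def
proof (intro allI impI)
  fix s assume H: "\<forall>n. \<exists>t\<in>derivS K. agree n s t"
  have "s \<in> K" using H assms derivS_sub unfolding closedS_def by blast
  moreover have "\<exists>t\<in>K. t \<noteq> s \<and> agree n s t" for n
  proof -
    obtain t where t: "t \<in> derivS K" "agree n s t" using H by blast
    show ?thesis
    proof (cases "t = s")
      case True
      then show ?thesis using t(1) unfolding derivS_def by blast
    next
      case False
      then show ?thesis using t derivS_sub by blast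
    qed
  qed
  ultimately show "s \<in> derivS K" unfolding derivS_def by blast
qed

lemma shq_apply[simp]: "shq j s k = s (k + j)"
  by (simp add: shq_def)

lemma derivS_inv:
  assumes "invS K" shows "invS (derivS K)"
  unfolding invS_def
proof
  fix s assume s: "s \<in> derivS K"
  have "shq 1 s \<in> K" using assms s derivS_sub unfolding invS_def by blast
  moreover have "\<exists>t\<in>K. t \<noteq> shq 1 s \<and> agree n (shq 1 s) t" for n
  proof -
    obtain t where t: "t \<in> K" "t \<noteq> s" "agree (Suc n) s t" using s unfolding derivS_def by blast
    have "shq 1 t \<in> K" using assms t(1) unfolding invS_def by blast
    moreover have "agree n (shq 1 s) (shq 1 t)" using t(3) unfolding agree_def by simp
    moreover have "shq 1 t \<noteq> shq 1 s"
    proof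
      assume eq: "shq 1 t = shq 1 s"
      have "t k = s k" for k
      proof (cases k)
        case 0 then show ?thesis using t(3) unfolding agree_def by simp
      next
        case (Suc k') then show ?thesis using fun_cong[OF eq, of k'] by simp
      qed
      then show False using t(2) by blast
    qed
    ultimately show ?thesis by blast
  qed
  ultimately show "shq 1 s \<in> derivS K" unfolding derivS_def by blast
qed

lemma isolated_not_deriv:
  assumes "\<forall>t\<in>K. agree n s t \<longrightarrow> t = s" shows "s \<notin> derivS K"
  using assms unfolding derivS_def by blast

lemma finite_F:
  assumes finA: "finite A" and al: "alph A K" and cl: "closedS K"
  shows "finite {s\<in>K. restrict s {..<N} \<notin> Lw N (derivS K)}"
proof (rule ccontr)
  define Q where "Q = {s\<in>K. restrict s {..<N} \<notin> Lw N (derivS K)}"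
  assume "\<not> finite {s\<in>K. restrict s {..<N} \<notin> Lw N (derivS K)}"
  then have inf: "infinite Q" unfolding Q_def by simp
  obtain s where s: "s \<in> K" "\<forall>m. infinite {t\<in>Q. agree m s t}"
    using konig_inf[OF finA al cl inf] Q_def by blast
  have "s \<in> derivS K"
  proof -
    have "\<exists>t\<in>K. t \<noteq> s \<and> agree n s t" for n
    proof -
      have "infinite ({t\<in>Q. agree n s t} - {s})" using s(2) by simp
      then obtain t where "t \<in> {t\<in>Q. agree n s t} - {s}" by (metis finite.emptyI ex_in_conv)
      then show ?thesis unfolding Q_def by blast
    qed
    then show ?thesis using s(1) unfolding derivS_def by blast
  qed
  moreover obtain t where t: "t \<in> Q" "agree N s t"
    using s(2) by (metis (mono_tags, lifting) Collect_empty_eq finite.emptyI)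
  have "restrict t {..<N} = restrict s {..<N}"
    using t(2) unfolding agree_def by (auto simp: restrict_def)
  ultimately have "restrict t {..<N} \<in> Lw N (derivS K)" unfolding Lw_def by auto
  then show False using t(1) unfolding Q_def by blast
qed

lemma shq_add: "shq i (shq j s) = shq (i + j) s"
  by (rule ext) (simp add: ac_simps)

lemma invS_shq:
  assumes "invS K" "s \<in> K" shows "shq j s \<in> K"
proof (induction j)
  case 0 then show ?case using assms(2) by (simp add: shq_def)
next
  case (Suc j)
  have "shq 1 (shq j s) \<in> K" using Suc assms(1) unfolding invS_def by blast
  moreover have "shq (Suc j) s = shq 1 (shq j s)" by (rule ext) simp
  ultimately show ?case by (simp only:)
qed

lemma ceil_div_iff:
  fixes i j N :: nat
  assumes "N \<ge> 1"
  shows "i < (j + N - 1) div N \<longleftrightarrow> i * N < j"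
proof -
  have "i < (j + N - 1) div N \<longleftrightarrow> Suc i \<le> (j + N - 1) div N" by (rule Suc_le_eq[symmetric])
  also have "\<dots> \<longleftrightarrow> Suc i * N \<le> j + N - 1" using assms by (simp add: less_eq_div_iff_mult_less_eq)
  also have "\<dots> \<longleftrightarrow> i * N < j" using assms by auto
  finally show ?thesis .
qed

lemma count_bound:
  fixes K :: "(nat \<Rightarrow> 'b) set"
  assumes inv: "invS K" and N: "N \<ge> 1" and finF: "finite F"
    and Fdef: "F = {s\<in>K. restrict s {..<N} \<notin> M}" and finM: "finite M"
  shows "card (Lw (k*N) K) \<le> (k*N+1) * (card F + 1) * (max 1 (card M))^k"
proof -
  define n where "n = k*N"
  define c where "c = (\<lambda>j::nat. (j + N - 1) div N)"
  define d :: "nat \<Rightarrow> 'b" where "d = (\<lambda>_. undefined)"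
  define Dom where "Dom = (\<lambda>j. (PiE {..<c j} (\<lambda>_. M)) \<times> insert d F)"
  define G where "G = (\<lambda>j (b :: nat \<Rightarrow> nat \<Rightarrow> 'b, t :: nat \<Rightarrow> 'b).
      restrict (\<lambda>i. if i < j then b (i div N) (i mod N) else t (i - j)) {..<n})"
  define Q where "Q = max 1 (card M)"
  have cj: "i < c j \<longleftrightarrow> i * N < j" for i j
    unfolding c_def using ceil_div_iff[OF N] .
  have key: "restrict s {..<n} \<in> (\<Union>j\<in>{..n}. G j ` Dom j)" if s: "s \<in> K" for s
  proof -
    obtain j where j: "j \<le> n" "\<forall>i<j. shq i s \<notin> F" "j < n \<longrightarrow> shq j s \<in> F"
    proof (cases "\<exists>j<n. shq j s \<in> F")
      case True
      define j0 where "j0 = (LEAST j. j < n \<and> shq j s \<in> F)"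
      have A: "j0 < n \<and> shq j0 s \<in> F" unfolding j0_def using LeastI_ex[OF True] .
      have B: "\<forall>i<j0. shq i s \<notin> F"
      proof (intro allI impI)
        fix i assume i: "i < j0"
        then have "\<not> (i < n \<and> shq i s \<in> F)" unfolding j0_def by (rule not_less_Least)
        moreover have "i < n" using i A by linarith
        ultimately show "shq i s \<notin> F" by blast
      qed
      show ?thesis
      proof (rule that[of j0])
        show "j0 \<le> n" using A by linarith
        show "\<forall>i<j0. shq i s \<notin> F" by (rule B)
        show "j0 < n \<longrightarrow> shq j0 s \<in> F" using A by blast
      qed
    next
      case False
      show ?thesis
      proof (rule that[of n])
        show "\<forall>i<n. shq i s \<notin> F" using False by blast
      qed simp_all
    qed
    define b where "b = restrict (\<lambda>i. restrict (shq (i*N) s) {..<N}) {..<c j}"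
    define t where "t = (if j < n then shq j s else d)"
    have bD: "b \<in> PiE {..<c j} (\<lambda>_. M)"
      unfolding b_def
    proof (subst restrict_PiE_iff, intro ballI)
      fix i assume "i \<in> {..<c j}"
      then have "i * N < j" using cj by simp
      then have "shq (i*N) s \<notin> F" using j(2) by blast
      moreover have "shq (i*N) s \<in> K" using invS_shq[OF inv s] .
      ultimately show "restrict (shq (i*N) s) {..<N} \<in> M" using Fdef by blast
    qed
    have tD: "t \<in> insert d F" unfolding t_def using j(3) by auto
    have "G j (b, t) = restrict s {..<n}"
    proof (rule ext)
      fix i
      show "G j (b, t) i = restrict s {..<n} i"
      proof (cases "i < n")
        case False then show ?thesis unfolding G_def by simp
      next
        case True
        show ?thesis
        proof (cases "i < j")
          case True
          have "(i div N) * N \<le> i" by simp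
          then have "(i div N) * N < j" using True by linarith
          then have "i div N < c j" using cj by simp
          moreover have "i mod N < N" using N by simp
          ultimately have "b (i div N) (i mod N) = s (i mod N + (i div N) * N)"
            unfolding b_def by simp
          also have "\<dots> = s i" by (simp add: mod_div_mult_eq)
          finally show ?thesis unfolding G_def using True \<open>i < n\<close> by simp
        next
          case False
          then have "j < n" using \<open>i < n\<close> by simp
          then have "t (i - j) = s i" unfolding t_def using False by simp
          then show ?thesis unfolding G_def using False \<open>i < n\<close> by simp
        qed
      qed
    qed
    moreover have "(b, t) \<in> Dom j" unfolding Dom_def using bD tD by simp
    ultimately have "restrict s {..<n} \<in> G j ` Dom j" by (metis image_eqI)
    moreover have "j \<in> {..n}" using j(1) by simp
    ultimately show ?thesis by (rule UN_I[rotated])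
  qed
  have sub: "Lw n K \<subseteq> (\<Union>j\<in>{..n}. G j ` Dom j)" using key unfolding Lw_def by blast
  have finDom: "finite (Dom j)" for j unfolding Dom_def using finM finF by (simp add: finite_PiE)
  have cn: "c n = k"
  proof -
    obtain N' where N': "N = Suc N'" using N by (cases N) auto
    have "n + N - 1 = N' + k * Suc N'" unfolding n_def N' by simp
    moreover have "(N' + k * Suc N') div Suc N' = k + N' div Suc N'" by (rule div_mult_self1) simp
    ultimately show ?thesis unfolding c_def N' by (simp add: ac_simps)
  qed
  have cardDom: "card (Dom j) \<le> Q^k * (card F + 1)" if "j \<le> n" for j
  proof -
    have "card (Dom j) = card (PiE {..<c j} (\<lambda>_. M)) * card (insert d F)"
      unfolding Dom_def by (simp add: card_cartesian_product)
    also have "card (PiE {..<c j} (\<lambda>_. M)) = card M ^ c j" by (simp add: card_PiE)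
    also have "card M ^ c j \<le> Q ^ c j" unfolding Q_def by (simp add: power_mono)
    also have "Q ^ c j \<le> Q ^ k"
    proof (rule power_increasing)
      have "j + N - 1 \<le> n + N - 1" using that by simp
      then have "c j \<le> c n" unfolding c_def by (rule div_le_mono)
      then show "c j \<le> k" using cn by simp
      show "1 \<le> Q" unfolding Q_def by simp
    qed
    also have "card (insert d F) \<le> card F + 1" using finF by (simp add: card_insert_if)
    finally show ?thesis by (simp add: mult_le_mono)
  qed
  have "card (Lw n K) \<le> card (\<Union>j\<in>{..n}. G j ` Dom j)"
  proof (rule card_mono)
    show "finite (\<Union>j\<in>{..n}. G j ` Dom j)" using finDom by simp
    show "Lw n K \<subseteq> (\<Union>j\<in>{..n}. G j ` Dom j)" by (rule sub)
  qed
  also have "\<dots> \<le> (\<Sum>j\<in>{..n}. card (G j ` Dom j))" by (rule card_UN_le) simp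
  also have "\<dots> \<le> (\<Sum>j\<in>{..n}. Q^k * (card F + 1))"
  proof (rule sum_mono)
    fix j assume "j \<in> {..n}"
    then show "card (G j ` Dom j) \<le> Q^k * (card F + 1)"
      using card_image_le[OF finDom[of j], of "G j"] cardDom[of j] by simp
  qed
  also have "\<dots> = (n+1) * (Q^k * (card F + 1))" by simp
  finally have "card (Lw n K) \<le> (n+1) * (Q^k * (card F + 1))" .
  moreover have "(n+1) * (Q^k * (card F + 1)) = (k*N+1) * (card F + 1) * Q^k"
    unfolding n_def by (simp only: mult.assoc mult.commute mult.left_commute)
  ultimately show ?thesis unfolding n_def Q_def by simp
qed

lemma exp_beats:
  fixes b c :: real
  assumes b: "b > 1"
  shows "\<exists>k\<ge>1. c * (real k + 1) < b^k"
proof -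
  have l1: "(\<lambda>k. real k / b^k) \<longlonglongrightarrow> 0" using lim_n_over_pown[of b] b by simp
  have "(\<lambda>k. (1/b)^k) \<longlonglongrightarrow> 0" using b by (intro LIMSEQ_realpow_zero) auto
  then have l2: "(\<lambda>k. 1 / b^k) \<longlonglongrightarrow> 0" by (simp add: power_one_over)
  have "(\<lambda>k. c * (real k / b^k) + c * (1 / b^k)) \<longlonglongrightarrow> c * 0 + c * 0"
    by (intro tendsto_add tendsto_mult l1 l2 tendsto_const)
  then have "(\<lambda>k. c * (real k / b^k) + c * (1 / b^k)) \<longlonglongrightarrow> 0" by simp
  then have "eventually (\<lambda>k. c * (real k / b^k) + c * (1 / b^k) < 1) sequentially"
    by (rule order_tendstoD(2)) simp
  then obtain K where K: "\<And>k. k \<ge> K \<Longrightarrow> c * (real k / b^k) + c * (1 / b^k) < 1"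
    unfolding eventually_sequentially by blast
  define k where "k = max K 1"
  have k1: "k \<ge> 1" and kK: "k \<ge> K" unfolding k_def by auto
  have pos: "b^k > 0" using b by simp
  have "c * (real k / b^k) + c * (1 / b^k) = c * (real k + 1) / b^k"
    by (simp add: add_divide_distrib distrib_left)
  then have "c * (real k + 1) / b^k < 1" using K[OF kK] by simp
  then have "c * (real k + 1) < b^k" using pos by (simp add: field_simps)
  then show ?thesis using k1 by blast
qed

lemma Lw_mono: "K1 \<subseteq> K2 \<Longrightarrow> Lw n K1 \<subseteq> Lw n K2"
  unfolding Lw_def by (rule image_mono)

theorem subshift_zero:
  fixes S :: "(nat \<Rightarrow> 'b) set" and \<epsilon> :: real
  assumes finA: "finite A" and alS: "alph A S" and clS: "closedS S" and ivS: "invS S"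
    and scat: "\<And>K. K \<subseteq> S \<Longrightarrow> K \<noteq> {} \<Longrightarrow> \<exists>s\<in>K. \<exists>n. \<forall>t\<in>K. agree n s t \<longrightarrow> t = s"
    and eps: "\<epsilon> > 0"
  shows "\<exists>n0\<ge>1. real (card (Lw n0 S)) < (1+\<epsilon>)^n0"
proof (rule ccontr)
  assume H: "\<not> ?thesis"
  define FF where "FF = {K. K \<subseteq> S \<and> closedS K \<and> invS K \<and> (\<forall>n\<ge>1. (1+\<epsilon>)^n \<le> real (card (Lw n K)))}"
  have SF: "S \<in> FF" using H clS ivS unfolding FF_def by (auto simp: not_less)
  have "\<exists>M\<in>uminus ` FF. \<forall>X\<in>uminus ` FF. M \<subseteq> X \<longrightarrow> X = M"
  proof (rule Zorn_Lemma2, intro ballI)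
    fix C assume C: "C \<in> chains (uminus ` FF)"
    show "\<exists>U\<in>uminus ` FF. \<forall>X\<in>C. X \<subseteq> U"
    proof (cases "C = {}")
      case True then show ?thesis using SF by blast
    next
      case False
      define C' where "C' = uminus ` C"
      have CC: "C \<subseteq> uminus ` FF" using C unfolding chains_def by blast
      have C'F: "C' \<subseteq> FF"
      proof
        fix K assume "K \<in> C'"
        then obtain X where "X \<in> C" "K = - X" unfolding C'_def by blast
        then obtain K' where "K' \<in> FF" "X = - K'" using CC by blast
        then show "K \<in> FF" using \<open>K = - X\<close> by simp
      qed
      have chC: "\<forall>X1\<in>C. \<forall>X2\<in>C. X1 \<subseteq> X2 \<or> X2 \<subseteq> X1"
        using C unfolding chains_def chain_subset_def by blast
      have ch': "\<forall>K1\<in>C'. \<forall>K2\<in>C'. K1 \<subseteq> K2 \<or> K2 \<subseteq> K1"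
        unfolding C'_def using chC by blast
      have ne': "C' \<noteq> {}" using False unfolding C'_def by simp
      have sub: "\<Inter>C' \<subseteq> S" using ne' C'F unfolding FF_def by blast
      have al': "\<forall>K\<in>C'. alph A K" using C'F alS alph_subset unfolding FF_def by blast
      have cl': "\<forall>K\<in>C'. closedS K" using C'F unfolding FF_def by blast
      have cl: "closedS (\<Inter>C')"
        unfolding closedS_def
      proof (intro allI impI)
        fix s assume Hs: "\<forall>n. \<exists>t\<in>\<Inter>C'. agree n s t"
        show "s \<in> \<Inter>C'"
        proof
          fix K assume K: "K \<in> C'"
          have "\<forall>n. \<exists>t\<in>K. agree n s t" using Hs K by blast
          then show "s \<in> K" using cl' K unfolding closedS_def by blast
        qed
      qed
      have iv: "invS (\<Inter>C')"
        using C'F unfolding invS_def FF_def by blast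
      have card: "\<forall>n\<ge>1. (1+\<epsilon>)^n \<le> real (card (Lw n (\<Inter>C')))"
      proof (intro allI impI)
        fix n :: nat assume n: "n \<ge> 1"
        let ?LL = "(\<lambda>K. Lw n K) ` C'"
        have "?LL \<subseteq> Pow (Lw n S)" using C'F Lw_mono unfolding FF_def by blast
        moreover have "finite (Lw n S)" using Lw_finite[OF finA alS] .
        ultimately have fin: "finite ?LL" by (meson finite_Pow_iff finite_subset)
        have chL: "\<forall>x\<in>?LL. \<forall>y\<in>?LL. x \<subseteq> y \<or> y \<subseteq> x"
        proof (intro ballI)
          fix x y assume "x \<in> ?LL" "y \<in> ?LL"
          then obtain K1 K2 where "K1 \<in> C'" "K2 \<in> C'" "x = Lw n K1" "y = Lw n K2" by blast
          then show "x \<subseteq> y \<or> y \<subseteq> x" using ch' Lw_mono by metis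
        qed
        obtain L0 where L0: "L0 \<in> ?LL" "\<forall>x\<in>?LL. L0 \<subseteq> x"
          using finite_chain_min[OF fin _ chL] ne' by blast
        then obtain K0 where K0: "K0 \<in> C'" "L0 = Lw n K0" by blast
        have "Lw n K0 \<subseteq> Lw n (\<Inter>C')"
        proof
          fix w assume "w \<in> Lw n K0"
          then have "\<forall>K\<in>C'. w \<in> Lw n K" using L0 K0 by blast
          then show "w \<in> Lw n (\<Inter>C')" using chain_L[OF finA al' cl' ch' ne'] by blast
        qed
        moreover have "finite (Lw n (\<Inter>C'))" using Lw_finite[OF finA] alph_subset[OF alS sub] by blast
        ultimately have "card (Lw n K0) \<le> card (Lw n (\<Inter>C'))" by (rule card_mono[rotated])
        moreover have "(1+\<epsilon>)^n \<le> real (card (Lw n K0))" using K0(1) C'F n unfolding FF_def by blast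
        ultimately show "(1+\<epsilon>)^n \<le> real (card (Lw n (\<Inter>C')))" by linarith
      qed
      have inF: "\<Inter>C' \<in> FF" unfolding FF_def using sub cl iv card by blast
      have "\<forall>X\<in>C. X \<subseteq> - \<Inter>C'"
      proof
        fix X assume "X \<in> C"
        then have "- X \<in> C'" unfolding C'_def by blast
        then have "\<Inter>C' \<subseteq> - X" by blast
        then show "X \<subseteq> - \<Inter>C'" by blast
      qed
      then show ?thesis using inF by blast
    qed
  qed
  then obtain K where KF: "K \<in> FF" and Kmin: "\<And>K2. K2 \<in> FF \<Longrightarrow> K2 \<subseteq> K \<Longrightarrow> K2 = K"
  proof -
    assume R: "\<And>K. K \<in> FF \<Longrightarrow> (\<And>K2. K2 \<in> FF \<Longrightarrow> K2 \<subseteq> K \<Longrightarrow> K2 = K) \<Longrightarrow> thesis"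
    assume "\<exists>M\<in>uminus ` FF. \<forall>X\<in>uminus ` FF. M \<subseteq> X \<longrightarrow> X = M"
    then obtain K where K: "K \<in> FF" "\<forall>X\<in>uminus ` FF. - K \<subseteq> X \<longrightarrow> X = - K" by blast
    show thesis
    proof (rule R[OF K(1)])
      fix K2 assume "K2 \<in> FF" "K2 \<subseteq> K"
      then have "- K2 = - K" using K(2) by blast
      then show "K2 = K" by simp
    qed
  qed
  have KS: "K \<subseteq> S" and clK: "closedS K" and ivK: "invS K"
    and cK: "\<forall>n\<ge>1. (1+\<epsilon>)^n \<le> real (card (Lw n K))" using KF unfolding FF_def by blast+
  have alK: "alph A K" using alph_subset[OF alS KS] .
  have "K \<noteq> {}"
  proof
    assume "K = {}"
    then have "card (Lw 1 K) = 0" unfolding Lw_def by simp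
    then show False using cK eps by force
  qed
  then obtain s0 n0 where s0: "s0 \<in> K" "\<forall>t\<in>K. agree n0 s0 t \<longrightarrow> t = s0" using scat[OF KS] by blast
  then have "s0 \<notin> derivS K" using isolated_not_deriv by blast
  then have DK: "derivS K \<noteq> K" using s0(1) by blast
  have "derivS K \<notin> FF" using Kmin derivS_sub DK by blast
  moreover have "derivS K \<subseteq> S" using derivS_sub KS by blast
  moreover have "closedS (derivS K)" using derivS_closed[OF clK] .
  moreover have "invS (derivS K)" using derivS_inv[OF ivK] .
  ultimately obtain N where N: "N \<ge> 1" "real (card (Lw N (derivS K))) < (1+\<epsilon>)^N"
    unfolding FF_def by (auto simp: not_le)
  define M where "M = Lw N (derivS K)"
  define F where "F = {s\<in>K. restrict s {..<N} \<notin> M}"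
  have finF: "finite F" using finite_F[OF finA alK clK] unfolding F_def M_def .
  have finM: "finite M" unfolding M_def using Lw_finite[OF finA] alph_subset[OF alK derivS_sub] by blast
  have cb: "card (Lw (k*N) K) \<le> (k*N+1) * (card F + 1) * (max 1 (card M))^k" for k
    by (rule count_bound[OF ivK N(1) finF F_def finM])
  define Q where "Q = real (max 1 (card M))"
  have Q1: "Q \<ge> 1" unfolding Q_def by simp
  have "1 < (1+\<epsilon>)^N" using eps N(1) by (intro one_less_power) auto
  then have QB: "Q < (1+\<epsilon>)^N" using N(2) unfolding Q_def M_def by (simp add: max_def)
  define b where "b = (1+\<epsilon>)^N / Q"
  have b1: "b > 1" unfolding b_def using Q1 QB by simp
  obtain k where k: "k \<ge> 1" "real N * (real (card F) + 1) * (real k + 1) < b^k"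
    using exp_beats[OF b1] by blast
  have "(1+\<epsilon>)^(k*N) \<le> real (card (Lw (k*N) K))" using cK k(1) N(1) by simp
  also have "\<dots> \<le> real ((k*N+1) * (card F + 1) * (max 1 (card M))^k)" using cb[of k] by linarith
  also have "\<dots> = (real k * real N + 1) * (real (card F) + 1) * Q^k" unfolding Q_def
    by (simp only: of_nat_mult of_nat_add of_nat_power of_nat_1)
  finally have I1: "(1+\<epsilon>)^(k*N) \<le> (real k * real N + 1) * (real (card F) + 1) * Q^k" .
  have "(1+\<epsilon>)^(k*N) = (b * Q)^k" unfolding b_def using Q1 by (simp add: power_mult mult.commute)
  also have "\<dots> = b^k * Q^k" by (simp add: power_mult_distrib)
  finally have "b^k * Q^k \<le> (real k * real N + 1) * (real (card F) + 1) * Q^k" using I1 by simp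
  moreover have "Q^k > 0" using Q1 by simp
  ultimately have "b^k \<le> (real k * real N + 1) * (real (card F) + 1)" by simp
  also have "\<dots> \<le> real N * (real (card F) + 1) * (real k + 1)"
  proof -
    have "real k * real N + 1 \<le> real N * (real k + 1)" using N(1) by (simp add: algebra_simps)
    then show ?thesis by (simp add: mult_right_mono mult.commute mult.left_commute)
  qed
  finally show False using k(2) by simp
qed

lemma card_Lw_le:
  assumes fin: "finite (Lw n K)" and rn: "r \<le> n"
  shows "card (Lw r K) \<le> card (Lw n K)"
proof -
  have "Lw r K = (\<lambda>w. restrict w {..<r}) ` Lw n K"
    unfolding Lw_def image_image
  proof (rule image_cong[OF refl])
    fix s show "restrict s {..<r} = restrict (restrict s {..<n}) {..<r}"
      using rn by (auto simp: restrict_def)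
  qed
  then show ?thesis using card_image_le[OF fin] by simp
qed

lemma card_Lw_add:
  fixes K :: "(nat \<Rightarrow> 'b) set"
  assumes finA: "finite A" and al: "alph A K" and iv: "invS K"
  shows "card (Lw (a+b) K) \<le> card (Lw a K) * card (Lw b K)"
proof -
  define G where "G = (\<lambda>(p :: nat \<Rightarrow> 'b, q :: nat \<Rightarrow> 'b). restrict (\<lambda>k. if k < a then p k else q (k - a)) {..<a+b})"
  have "Lw (a+b) K \<subseteq> G ` (Lw a K \<times> Lw b K)"
  proof
    fix w assume "w \<in> Lw (a+b) K"
    then obtain s where s: "s \<in> K" "w = restrict s {..<a+b}" unfolding Lw_def by blast
    have "shq a s \<in> K" using invS_shq[OF iv s(1)] .
    then have mem: "(restrict s {..<a}, restrict (shq a s) {..<b}) \<in> Lw a K \<times> Lw b K"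
      using s(1) unfolding Lw_def by blast
    have "G (restrict s {..<a}, restrict (shq a s) {..<b}) = w"
      unfolding G_def s(2) by (rule ext) (auto simp: restrict_def)
    then show "w \<in> G ` (Lw a K \<times> Lw b K)" using mem by (metis image_eqI)
  qed
  moreover have "finite (Lw a K \<times> Lw b K)" using Lw_finite[OF finA al] by simp
  ultimately have "card (Lw (a+b) K) \<le> card (Lw a K \<times> Lw b K)"
    using card_image_le card_mono finite_imageI le_trans by metis
  then show ?thesis by (simp add: card_cartesian_product)
qed

lemma card_Lw_pow:
  assumes finA: "finite A" and al: "alph A K" and iv: "invS K"
  shows "card (Lw (q*n0 + r) K) \<le> card (Lw n0 K)^q * card (Lw r K)"
proof (induction q)
  case 0 then show ?case by simp
next
  case (Suc q)
  have "card (Lw (Suc q * n0 + r) K) = card (Lw (n0 + (q*n0 + r)) K)" by (simp add: add.assoc)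
  also have "\<dots> \<le> card (Lw n0 K) * card (Lw (q*n0 + r) K)" by (rule card_Lw_add[OF finA al iv])
  also have "\<dots> \<le> card (Lw n0 K) * (card (Lw n0 K)^q * card (Lw r K))"
    using Suc by (simp add: mult_le_mono2)
  finally show ?case by (simp add: mult.assoc)
qed

theorem subshift_bound:
  fixes S :: "(nat \<Rightarrow> 'b) set" and \<epsilon> :: real
  assumes finA: "finite A" and alS: "alph A S" and clS: "closedS S" and ivS: "invS S"
    and scat: "\<And>K. K \<subseteq> S \<Longrightarrow> K \<noteq> {} \<Longrightarrow> \<exists>s\<in>K. \<exists>n. \<forall>t\<in>K. agree n s t \<longrightarrow> t = s"
    and eps: "\<epsilon> > 0"
  shows "\<exists>C>0. \<forall>n. real (card (Lw n S)) \<le> C * (1+\<epsilon>)^n"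
proof -
  obtain n0 where n0: "n0 \<ge> 1" "real (card (Lw n0 S)) < (1+\<epsilon>)^n0"
    using subshift_zero[OF finA alS clS ivS scat eps] by blast
  define C where "C = (1+\<epsilon>)^n0"
  have Cpos: "C > 0" unfolding C_def using eps by simp
  have "real (card (Lw n S)) \<le> C * (1+\<epsilon>)^n" for n
  proof -
    define q where "q = n div n0"
    define r where "r = n mod n0"
    have nqr: "n = q * n0 + r" unfolding q_def r_def by simp
    have rl: "r \<le> n0" unfolding r_def using n0(1) by (simp add: less_imp_le)
    have "card (Lw n S) \<le> card (Lw n0 S)^q * card (Lw r S)"
      using card_Lw_pow[OF finA alS ivS, of q n0 r] nqr by simp
    also have "\<dots> \<le> card (Lw n0 S)^q * card (Lw n0 S)"
      using card_Lw_le[OF Lw_finite[OF finA alS] rl] by (simp add: mult_le_mono2)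
    finally have I: "real (card (Lw n S)) \<le> real (card (Lw n0 S))^q * real (card (Lw n0 S))"
      by (metis of_nat_le_iff of_nat_mult of_nat_power)
    have "real (card (Lw n0 S))^q * real (card (Lw n0 S)) \<le> ((1+\<epsilon>)^n0)^q * (1+\<epsilon>)^n0"
      using n0(2) by (intro mult_mono power_mono) auto
    also have "\<dots> = (1+\<epsilon>)^(q*n0 + n0)" by (simp add: power_mult power_add mult.commute)
    also have "\<dots> \<le> (1+\<epsilon>)^(n + n0)"
      using eps nqr by (intro power_increasing) auto
    also have "\<dots> = C * (1+\<epsilon>)^n" unfolding C_def by (simp add: power_add mult.commute)
    finally show ?thesis using I by linarith
  qed
  then show ?thesis using Cpos by blast
qed

definition tyseq :: "('a \<Rightarrow> 'a) \<Rightarrow> 'a set set \<Rightarrow> 'a \<Rightarrow> nat \<Rightarrow> 'a set set" where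
  "tyseq f U x k = {u\<in>U. (f^^k) x \<in> u}"

definition Sig :: "'a topology \<Rightarrow> ('a \<Rightarrow> 'a) \<Rightarrow> 'a set set \<Rightarrow> (nat \<Rightarrow> 'a set set) set" where
  "Sig X f U = {s. \<forall>n. \<exists>x\<in>topspace X. agree n s (tyseq f U x)}"

definition Cset :: "'a topology \<Rightarrow> ('a \<Rightarrow> 'a) \<Rightarrow> 'a set set \<Rightarrow> nat \<Rightarrow> (nat \<Rightarrow> 'a set set) \<Rightarrow> 'a set" where
  "Cset X f U n s = {x\<in>topspace X. agree n s (tyseq f U x)}"

definition LC :: "'a topology \<Rightarrow> 'a set \<Rightarrow> bool" where
  "LC X A \<longleftrightarrow> (\<exists>Op Fc. openin X Op \<and> closedin X Fc \<and> A = Op \<inter> Fc)"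

lemma cont_funpow:
  assumes "continuous_map X X f" shows "continuous_map X X (f^^k)"
proof (induction k)
  case 0 then show ?case by (simp add: continuous_map_id)
next
  case (Suc k)
  have "continuous_map X X (f \<circ> (f^^k))" using continuous_map_compose[OF Suc assms] .
  then show ?case by (simp only: funpow.simps(2))
qed

lemma funpow_top:
  assumes "continuous_map X X f" "x \<in> topspace X" shows "(f^^k) x \<in> topspace X"
  using cont_funpow[OF assms(1), of k] assms(2) continuous_map_image_subset_topspace by blast

lemma tyseq_shift: "tyseq f U (f x) k = tyseq f U x (Suc k)"
  unfolding tyseq_def by (simp add: funpow_swap1)

lemma Sig_alph: "alph (Pow U) (Sig X f U)"
  unfolding alph_def Sig_def
proof (intro ballI allI)
  fix s k assume "s \<in> {s. \<forall>n. \<exists>x\<in>topspace X. agree n s (tyseq f U x)}"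
  then obtain x where "agree (Suc k) s (tyseq f U x)" by blast
  then have "s k = tyseq f U x k" unfolding agree_def by simp
  then show "s k \<in> Pow U" unfolding tyseq_def by auto
qed

lemma Sig_closed: "closedS (Sig X f U)"
  unfolding closedS_def
proof (intro allI impI)
  fix s assume H: "\<forall>n. \<exists>t\<in>Sig X f U. agree n s t"
  show "s \<in> Sig X f U" unfolding Sig_def
  proof (intro CollectI allI)
    fix n
    obtain t where t: "t \<in> Sig X f U" "agree n s t" using H by blast
    then obtain x where "x \<in> topspace X" "agree n t (tyseq f U x)" unfolding Sig_def by blast
    then show "\<exists>x\<in>topspace X. agree n s (tyseq f U x)" using t(2) agree_trans by blast
  qed
qed

lemma Sig_inv:
  assumes cont: "continuous_map X X f" shows "invS (Sig X f U)"
  unfolding invS_def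
proof
  fix s assume s: "s \<in> Sig X f U"
  show "shq 1 s \<in> Sig X f U" unfolding Sig_def
  proof (intro CollectI allI)
    fix n
    obtain x where x: "x \<in> topspace X" "agree (Suc n) s (tyseq f U x)" using s unfolding Sig_def by blast
    have "f x \<in> topspace X" using funpow_top[OF cont x(1), of 1] by simp
    moreover have "agree n (shq 1 s) (tyseq f U (f x))"
      using x(2) unfolding agree_def by (simp add: tyseq_shift)
    ultimately show "\<exists>x\<in>topspace X. agree n (shq 1 s) (tyseq f U x)" by blast
  qed
qed

lemma LC_open: "openin X A \<Longrightarrow> LC X A"
  unfolding LC_def by (rule exI[of _ A], rule exI[of _ "topspace X"]) (auto dest: openin_subset)

lemma LC_closed: "closedin X A \<Longrightarrow> LC X A"
  unfolding LC_def by (rule exI[of _ "topspace X"], rule exI[of _ A]) (auto dest: closedin_subset)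

lemma LC_Int: "LC X A \<Longrightarrow> LC X B \<Longrightarrow> LC X (A \<inter> B)"
  unfolding LC_def
proof -
  assume "\<exists>Op Fc. openin X Op \<and> closedin X Fc \<and> A = Op \<inter> Fc" "\<exists>Op Fc. openin X Op \<and> closedin X Fc \<and> B = Op \<inter> Fc"
  then obtain O1 F1 O2 F2 where "openin X O1" "closedin X F1" "A = O1 \<inter> F1"
    "openin X O2" "closedin X F2" "B = O2 \<inter> F2" by blast
  then show "\<exists>Op Fc. openin X Op \<and> closedin X Fc \<and> A \<inter> B = Op \<inter> Fc"
    by (intro exI[of _ "O1 \<inter> O2"] exI[of _ "F1 \<inter> F2"]) auto
qed

lemma LC_sub: "LC X A \<Longrightarrow> A \<subseteq> topspace X"
  unfolding LC_def by (auto dest: openin_subset)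

lemma LC_Inter:
  assumes "finite I" "\<forall>i\<in>I. LC X (B i)"
  shows "LC X (topspace X \<inter> \<Inter>(B ` I))"
  using assms
proof (induction I rule: finite_induct)
  case empty then show ?case by (simp add: LC_open)
next
  case (insert i I)
  have "topspace X \<inter> \<Inter>(B ` insert i I) = B i \<inter> (topspace X \<inter> \<Inter>(B ` I))"
    using LC_sub[of X "B i"] insert.prems by auto
  then show ?case using LC_Int insert by auto
qed

lemma Cset_LC:
  assumes cont: "continuous_map X X f" and finU: "finite U" and opU: "\<forall>u\<in>U. openin X u"
  shows "LC X (Cset X f U n s)"
proof -
  define P where "P = (\<lambda>(k, u). {x\<in>topspace X. ((f^^k) x \<in> u) = (u \<in> s k)})"
  have PLC: "\<forall>i\<in>{..<n} \<times> U. LC X (P i)"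
  proof
    fix i assume i: "i \<in> {..<n} \<times> U"
    obtain k u where ku: "i = (k, u)" "u \<in> U" using i by blast
    have op: "openin X {x\<in>topspace X. (f^^k) x \<in> u}"
      using openin_continuous_map_preimage[OF cont_funpow[OF cont] ] opU ku(2) by blast
    show "LC X (P i)"
    proof (cases "u \<in> s k")
      case True
      then have "P i = {x\<in>topspace X. (f^^k) x \<in> u}" unfolding P_def ku by simp
      then show ?thesis using LC_open[OF op] by simp
    next
      case False
      then have "P i = topspace X - {x\<in>topspace X. (f^^k) x \<in> u}" unfolding P_def ku by auto
      then show ?thesis using LC_closed[OF closedin_diff[OF closedin_topspace op]] by simp
    qed
  qed
  have L1: "LC X (topspace X \<inter> \<Inter>(P ` ({..<n} \<times> U)))"
    by (rule LC_Inter) (use finU PLC in auto)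
  have eq: "Cset X f U n s = (topspace X \<inter> \<Inter>(P ` ({..<n} \<times> U))) \<inter> (if (\<forall>k<n. s k \<subseteq> U) then topspace X else {})"
  proof (rule set_eqI)
    fix x
    have "x \<in> Cset X f U n s \<longleftrightarrow> x \<in> topspace X \<and> (\<forall>k<n. s k = {u\<in>U. (f^^k) x \<in> u})"
      unfolding Cset_def agree_def tyseq_def by simp
    also have "\<dots> \<longleftrightarrow> x \<in> topspace X \<and> (\<forall>k<n. \<forall>u\<in>U. ((f^^k) x \<in> u) = (u \<in> s k)) \<and> (\<forall>k<n. s k \<subseteq> U)"
      by blast
    also have "\<dots> \<longleftrightarrow> x \<in> (topspace X \<inter> \<Inter>(P ` ({..<n} \<times> U))) \<inter> (if (\<forall>k<n. s k \<subseteq> U) then topspace X else {})"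
      unfolding P_def by auto
    finally show "x \<in> Cset X f U n s \<longleftrightarrow> x \<in> (topspace X \<inter> \<Inter>(P ` ({..<n} \<times> U))) \<inter> (if (\<forall>k<n. s k \<subseteq> U) then topspace X else {})" .
  qed
  show ?thesis
  proof (cases "\<forall>k<n. s k \<subseteq> U")
    case True
    then have "Cset X f U n s = topspace X \<inter> \<Inter>(P ` ({..<n} \<times> U))" using eq by auto
    then show ?thesis using L1 by simp
  next
    case False
    then have "Cset X f U n s = {}" using eq by (simp only: if_not_P[OF False] Int_empty_right if_False)
    then show ?thesis using LC_open[of X "{}"] by simp
  qed
qed

lemma noeth_min:
  assumes noeth: "noetherian_space X" and ne: "D \<noteq> {}" and cl: "\<forall>A\<in>D. closedin X A"
  shows "\<exists>A0\<in>D. \<forall>A\<in>D. A \<subseteq> A0 \<longrightarrow> A = A0"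
proof (rule ccontr)
  assume "\<not> ?thesis"
  then have H: "\<forall>A0\<in>D. \<exists>A. A \<in> D \<and> A \<subseteq> A0 \<and> A \<noteq> A0" by blast
  then have "\<exists>nx. \<forall>A0\<in>D. nx A0 \<in> D \<and> nx A0 \<subseteq> A0 \<and> nx A0 \<noteq> A0"
    by (rule bchoice)
  then obtain nx where nx0: "\<forall>A0\<in>D. nx A0 \<in> D \<and> nx A0 \<subseteq> A0 \<and> nx A0 \<noteq> A0" by (elim exE)
  have nx: "\<And>A0. A0 \<in> D \<Longrightarrow> nx A0 \<in> D \<and> nx A0 \<subseteq> A0 \<and> nx A0 \<noteq> A0"
    using nx0 by (rule bspec)
  obtain A1 where A1: "A1 \<in> D" using ne by blast
  define c where "c = (\<lambda>n. (nx^^n) A1)"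
  have cSuc: "c (Suc n) = nx (c n)" for n by (simp add: c_def)
  have cD: "c n \<in> D" for n
  proof (induction n)
    case 0 show ?case using A1 by (simp add: c_def)
  next
    case (Suc n) then show ?case using nx[OF Suc] cSuc[of n] by simp
  qed
  have cS: "c (Suc n) \<subseteq> c n \<and> c (Suc n) \<noteq> c n" for n
    using nx[OF cD[of n]] cSuc[of n] by simp
  have dec: "decseq c" by (rule decseq_SucI) (use cS in blast)
  have clc: "\<forall>n. closedin X (c n)" using cD cl by blast
  have "\<exists>m. \<forall>n\<ge>m. c n = c m"
    using noeth[unfolded noetherian_space_def, rule_format, of c] dec clc by blast
  then obtain m where m: "\<forall>n\<ge>m. c n = c m" by blast
  have "m \<le> Suc m" by simp
  then have "c (Suc m) = c m" using m by blast
  then show False using cS by blast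
qed

lemma Sig_scattered:
  assumes cont: "continuous_map X X f" and finU: "finite U" and opU: "\<forall>u\<in>U. openin X u"
    and noeth: "noetherian_space X"
    and KS: "K \<subseteq> Sig X f U" and Kne: "K \<noteq> {}"
  shows "\<exists>s\<in>K. \<exists>n. \<forall>t\<in>K. agree n s t \<longrightarrow> t = s"
proof -
  define D where "D = {X closure_of (Cset X f U n s) | n s. s \<in> K}"
  have "D \<noteq> {}" using Kne unfolding D_def by blast
  moreover have "\<forall>A\<in>D. closedin X A" unfolding D_def by auto
  ultimately obtain A0 where A0: "A0 \<in> D" "\<forall>A\<in>D. A \<subseteq> A0 \<longrightarrow> A = A0"
    using noeth_min[OF noeth] by blast
  then obtain n0 s0 where s0: "s0 \<in> K" "A0 = X closure_of (Cset X f U n0 s0)" unfolding D_def by blast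
  have "\<forall>t\<in>K. agree n0 s0 t \<longrightarrow> t = s0"
  proof (intro ballI impI)
    fix t assume tK: "t \<in> K" and ag: "agree n0 s0 t"
    show "t = s0"
    proof (rule ccontr)
      assume "t \<noteq> s0"
      then obtain m where m: "t m \<noteq> s0 m" by blast
      define m' where "m' = Suc m + n0"
      have sub: "Cset X f U m' r \<subseteq> Cset X f U n0 s0" if "agree n0 s0 r" for r
      proof
        fix x assume "x \<in> Cset X f U m' r"
        then have "x \<in> topspace X" "agree m' r (tyseq f U x)" unfolding Cset_def by auto
        then have "agree n0 r (tyseq f U x)" using agree_mono[of n0 m'] unfolding m'_def by simp
        then show "x \<in> Cset X f U n0 s0" using that \<open>x \<in> topspace X\<close> agree_trans unfolding Cset_def by blast
      qed
      have eqt: "X closure_of (Cset X f U m' t) = A0"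
      proof -
        have "X closure_of (Cset X f U m' t) \<in> D" using tK unfolding D_def by blast
        moreover have "X closure_of (Cset X f U m' t) \<subseteq> A0"
          unfolding s0(2) by (rule closure_of_mono[OF sub[OF ag]])
        ultimately show ?thesis using A0(2) by blast
      qed
      have eqs: "X closure_of (Cset X f U m' s0) = A0"
      proof -
        have "X closure_of (Cset X f U m' s0) \<in> D" using s0(1) unfolding D_def by blast
        moreover have "X closure_of (Cset X f U m' s0) \<subseteq> A0"
          unfolding s0(2) by (rule closure_of_mono[OF sub[OF agree_refl]])
        ultimately show ?thesis using A0(2) by blast
      qed
      have disj: "Cset X f U m' t \<inter> Cset X f U m' s0 = {}"
      proof (rule ccontr)
        assume "Cset X f U m' t \<inter> Cset X f U m' s0 \<noteq> {}"
        then obtain x where "agree m' t (tyseq f U x)" "agree m' s0 (tyseq f U x)" unfolding Cset_def by blast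
        then have "t m = s0 m" unfolding agree_def m'_def by simp
        then show False using m by simp
      qed
      obtain x where x: "x \<in> Cset X f U m' s0"
        using KS s0(1) unfolding Sig_def Cset_def by blast
      obtain O1 F1 where O1: "openin X O1" "closedin X F1" "Cset X f U m' s0 = O1 \<inter> F1"
        using Cset_LC[OF cont finU opU] unfolding LC_def by blast
      have xtop: "Cset X f U m' s0 \<subseteq> topspace X" unfolding Cset_def by blast
      have "x \<in> A0" using closure_of_subset[OF xtop] x eqs by blast
      then have "x \<in> X closure_of (Cset X f U m' t)" using eqt by simp
      moreover have "x \<in> O1" using x O1(3) by blast
      ultimately obtain y where y: "y \<in> Cset X f U m' t" "y \<in> O1"
        using O1(1) unfolding in_closure_of by blast
      have ytop: "Cset X f U m' t \<subseteq> topspace X" unfolding Cset_def by blast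
      have "y \<in> A0" using closure_of_subset[OF ytop] y(1) eqt by blast
      then have "y \<in> X closure_of (Cset X f U m' s0)" using eqs by simp
      moreover have "X closure_of (Cset X f U m' s0) \<subseteq> F1"
        using closure_of_minimal[OF _ O1(2)] O1(3) by blast
      ultimately have "y \<in> Cset X f U m' s0" using y(2) O1(3) by blast
      then show False using y(1) disj by blast
    qed
  qed
  then show ?thesis using s0(1) by blast
qed

lemma tyseq_ne:
  assumes cont: "continuous_map X X f" and cov: "\<Union>U = topspace X" and x: "x \<in> topspace X"
  shows "tyseq f U x k \<noteq> {}"
proof -
  have "(f^^k) x \<in> \<Union>U" using funpow_top[OF cont x] cov by simp
  then show ?thesis unfolding tyseq_def by blast
qed

lemma cover_exists:
  assumes cont: "continuous_map X X f" and cov: "finite_open_cover X U"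
  shows "\<exists>W. W \<subseteq> join_iter X f U n \<and> finite W \<and> topspace X \<subseteq> \<Union>W \<and> card W \<le> card (Lw n (Sig X f U))"
proof -
  have finU: "finite U" and UU: "\<Union>U = topspace X" using cov unfolding finite_open_cover_def by auto
  define Lx where "Lx = (\<lambda>x. restrict (tyseq f U x) {..<n}) ` topspace X"
  have tS: "tyseq f U x \<in> Sig X f U" if "x \<in> topspace X" for x
    unfolding Sig_def using that agree_refl by blast
  have LxL: "Lx \<subseteq> Lw n (Sig X f U)" unfolding Lx_def Lw_def using tS by blast
  have finL: "finite (Lw n (Sig X f U))" using Lw_finite[OF _ Sig_alph] finU by blast
  then have finLx: "finite Lx" using LxL finite_subset by blast
  define g :: "(nat \<Rightarrow> 'a set set) \<Rightarrow> nat \<Rightarrow> 'a set" where "g = (\<lambda>w k. SOME u. u \<in> w k)"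
  define Wf where "Wf = (\<lambda>w. topspace X \<inter> (\<Inter>k\<in>{..<n}. (f ^^ k) -` (g w k)))"
  define W where "W = Wf ` Lx"
  have gmem: "g (restrict (tyseq f U x) {..<n}) k \<in> tyseq f U x k" if "x \<in> topspace X" "k < n" for x k
  proof -
    have "tyseq f U x k \<noteq> {}" using tyseq_ne[OF cont UU that(1)] .
    then have "\<exists>u. u \<in> restrict (tyseq f U x) {..<n} k" using that(2) by auto
    then have "g (restrict (tyseq f U x) {..<n}) k \<in> restrict (tyseq f U x) {..<n} k"
      unfolding g_def by (rule someI_ex)
    then show ?thesis using that(2) by simp
  qed
  have WJ: "W \<subseteq> join_iter X f U n"
  proof
    fix A assume "A \<in> W"
    then obtain x where x: "x \<in> topspace X" "A = Wf (restrict (tyseq f U x) {..<n})"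
      unfolding W_def Lx_def by blast
    have "\<forall>k<n. g (restrict (tyseq f U x) {..<n}) k \<in> U"
      using gmem[OF x(1)] unfolding tyseq_def by blast
    then show "A \<in> join_iter X f U n"
      unfolding join_iter_def x(2) Wf_def by blast
  qed
  have finW: "finite W" unfolding W_def using finLx by simp
  have cardW: "card W \<le> card (Lw n (Sig X f U))"
    unfolding W_def using card_image_le[OF finLx, of Wf] card_mono[OF finL LxL] by linarith
  have covW: "topspace X \<subseteq> \<Union>W"
  proof
    fix x assume x: "x \<in> topspace X"
    have "x \<in> Wf (restrict (tyseq f U x) {..<n})"
      unfolding Wf_def using x gmem[OF x] unfolding tyseq_def by auto
    moreover have "Wf (restrict (tyseq f U x) {..<n}) \<in> W" unfolding W_def Lx_def using x by blast
    ultimately show "x \<in> \<Union>W" by blast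
  qed
  then show ?thesis using WJ finW cardW by blast
qed

lemma N_le_Lw:
  assumes cont: "continuous_map X X f" and cov: "finite_open_cover X U"
  shows "min_subcover_card X (join_iter X f U n) \<le> card (Lw n (Sig X f U))"
proof -
  obtain W where W0: "W \<subseteq> join_iter X f U n \<and> finite W \<and> topspace X \<subseteq> \<Union>W \<and> card W \<le> card (Lw n (Sig X f U))"
    using cover_exists[OF cont cov, of n] by (elim exE)
  then have W: "W \<subseteq> join_iter X f U n" "finite W" "topspace X \<subseteq> \<Union>W" "card W \<le> card (Lw n (Sig X f U))"
    by simp_all
  have "min_subcover_card X (join_iter X f U n) \<le> card W"
    unfolding min_subcover_card_def
  proof (rule Least_le)
    show "\<exists>Wa. Wa \<subseteq> join_iter X f U n \<and> finite Wa \<and> card Wa = card W \<and> topspace X \<subseteq> \<Union>Wa"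
      by (rule exI[of _ W]) (use W in simp)
  qed
  then show ?thesis using W(4) by linarith
qed

theorem part1:
  assumes "compact_space X" and noeth: "noetherian_space X" and cont: "continuous_map X X f"
    and cov: "finite_open_cover X U" and eps: "\<epsilon> > 0"
  shows "\<exists>C::real. C > 0 \<and> (\<forall>n. real (min_subcover_card X (join_iter X f U n)) \<le> C * (1 + \<epsilon>) ^ n)"
proof -
  have finU: "finite U" and opU: "\<forall>u\<in>U. openin X u" using cov unfolding finite_open_cover_def by auto
  obtain C where C: "C > 0" "\<forall>n. real (card (Lw n (Sig X f U))) \<le> C * (1+\<epsilon>)^n"
    using subshift_bound[OF _ Sig_alph Sig_closed Sig_inv[OF cont] Sig_scattered[OF cont finU opU noeth] eps] finU
    by blast
  have "real (min_subcover_card X (join_iter X f U n)) \<le> C * (1 + \<epsilon>) ^ n" for n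
    using N_le_Lw[OF cont cov, of n] C(2) by (meson of_nat_le_iff order_trans)
  then show ?thesis using C(1) by blast
qed

lemma N_ge1:
  assumes cont: "continuous_map X X f" and cov: "finite_open_cover X U" and ne: "topspace X \<noteq> {}"
  shows "min_subcover_card X (join_iter X f U n) \<ge> 1"
proof -
  let ?P = "\<lambda>k. \<exists>W. W \<subseteq> join_iter X f U n \<and> finite W \<and> card W = k \<and> topspace X \<subseteq> \<Union>W"
  obtain W0 where W0: "W0 \<subseteq> join_iter X f U n \<and> finite W0 \<and> topspace X \<subseteq> \<Union>W0 \<and> card W0 \<le> card (Lw n (Sig X f U))"
    using cover_exists[OF cont cov, of n] by (elim exE)
  have "?P (card W0)" by (rule exI[of _ W0]) (use W0 in simp)
  then have "\<exists>k. ?P k" by (rule exI)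
  then have "?P (LEAST k. ?P k)" by (rule LeastI_ex)
  then obtain W where W: "finite W" "card W = (LEAST k. ?P k)" "topspace X \<subseteq> \<Union>W" by blast
  have "W \<noteq> {}" using W(3) ne by auto
  then have "card W \<ge> 1" using W(1) by (simp add: Suc_le_eq card_gt_0_iff)
  then show ?thesis using W(2) unfolding min_subcover_card_def by simp
qed

lemma N_empty:
  assumes "topspace X = {}"
  shows "min_subcover_card X V = 0"
proof -
  have "min_subcover_card X V \<le> 0"
    unfolding min_subcover_card_def
    by (rule Least_le) (rule exI[of _ "{}"], use assms in simp)
  then show ?thesis by simp
qed

lemma lim_zero:
  assumes comp: "compact_space X" and noeth: "noetherian_space X" and cont: "continuous_map X X f"
    and cov: "finite_open_cover X U"
  shows "lim (\<lambda>n. ln (real (min_subcover_card X (join_iter X f U n))) / real n) = 0"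
proof -
  define a where "a = (\<lambda>n. real (min_subcover_card X (join_iter X f U n)))"
  have "(\<lambda>n. ln (a n) / real n) \<longlonglongrightarrow> 0"
  proof (cases "topspace X = {}")
    case True
    have "a n = 0" for n unfolding a_def using N_empty[OF True, of "join_iter X f U n"] by (simp only: of_nat_0)
    then show ?thesis by simp
  next
    case False
    have a1: "a n \<ge> 1" for n unfolding a_def using N_ge1[OF cont cov False] by simp
    show ?thesis unfolding LIMSEQ_iff
    proof (intro allI impI)
      fix r :: real assume r: "r > 0"
      define \<epsilon> where "\<epsilon> = exp (r/2) - 1"
      have eps: "\<epsilon> > 0" unfolding \<epsilon>_def using r by simp
      have l1e: "ln (1 + \<epsilon>) = r/2" unfolding \<epsilon>_def by simp
      obtain C where C: "C > 0" "\<And>n. a n \<le> C * (1 + \<epsilon>)^n"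
        using part1[OF comp noeth cont cov eps] unfolding a_def by blast
      obtain no :: nat where no: "real no > 2 * \<bar>ln C\<bar> / r" using reals_Archimedean2 by blast
      define no' where "no' = Suc no"
      have "\<bar>ln (a n) / real n - 0\<bar> < r" if n: "n \<ge> no'" for n
      proof -
        have npos: "real n > 0" using n unfolding no'_def by simp
        have nbig: "real n > 2 * \<bar>ln C\<bar> / r" using n no unfolding no'_def by simp
        have lnpos: "ln (a n) \<ge> 0" using a1[of n] by simp
        have "ln (a n) \<le> ln (C * (1 + \<epsilon>)^n)"
          using C(2)[of n] a1[of n] by (subst ln_le_cancel_iff) auto
        also have "\<dots> = ln C + real n * (r/2)"
          using C(1) eps by (simp add: ln_mult ln_realpow l1e)
        finally have I: "ln (a n) \<le> ln C + real n * (r/2)" .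
        have "ln C < real n * (r/2)"
        proof -
          have "2 * \<bar>ln C\<bar> < real n * r" using nbig r by (simp add: field_simps)
          then show ?thesis by linarith
        qed
        then have "ln (a n) < real n * r" using I by linarith
        then have "ln (a n) / real n < r" using npos by (simp add: field_simps)
        moreover have "ln (a n) / real n \<ge> 0" using lnpos npos by simp
        ultimately show ?thesis by simp
      qed
      then show "\<exists>no. \<forall>n\<ge>no. norm (ln (a n) / real n - 0) < r" by auto
    qed
  qed
  then show ?thesis unfolding a_def by (rule limI)
qed

theorem theorem3p1:
  fixes X :: "'a topology" and f :: "'a \<Rightarrow> 'a"
  assumes "compact_space X"
    and "noetherian_space X"
    and "continuous_map X X f"
  shows "(\<forall>U. finite_open_cover X U \<longrightarrow>
            (\<forall>\<epsilon>::real. \<epsilon> > 0 \<longrightarrow>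
               (\<exists>C::real. C > 0 \<and>
                  (\<forall>n. real (min_subcover_card X (join_iter X f U n)) \<le> C * (1 + \<epsilon>) ^ n))))
         \<and> h_top X f = 0"
proof
  show "\<forall>U. finite_open_cover X U \<longrightarrow>
            (\<forall>\<epsilon>::real. \<epsilon> > 0 \<longrightarrow>
               (\<exists>C::real. C > 0 \<and>
                  (\<forall>n. real (min_subcover_card X (join_iter X f U n)) \<le> C * (1 + \<epsilon>) ^ n)))"
    using part1[OF assms] by blast
  have cv: "finite_open_cover X {topspace X}" unfolding finite_open_cover_def by simp
  have "h_top X f = (SUP U\<in>{U. finite_open_cover X U}. ereal 0)"
    unfolding h_top_def by (rule SUP_cong) (simp_all add: lim_zero[OF assms])
  also have "\<dots> = ereal 0"
  proof (rule SUP_const)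
    show "{U. finite_open_cover X U} \<noteq> {}" using cv by blast
  qed
  also have "\<dots> = 0" by (simp add: zero_ereal_def)
  finally show "h_top X f = 0" .
qed

end
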